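(* For every integer $j\geq 3$, the limit $\lim_{t\to-1}g_j(t)$ exists and is strictly negative.
   Context: $\omega_j$ is the surface area of $\mathbb{S}^{j-1}\subseteq\mathbb{R}^j$. The Berg functions $g_j\in C^\infty(-1,1)$, $j\ge2$, are defined by $g_2(t)=\frac{1}{2\pi}(\pi-\arccos t)(1-t^2)^{1/2}-\frac{1}{4\pi}t$, $g_3(t)=\frac{1}{2\pi}\big(1+t\log(1-t)+(\tfrac43-\log 2)t\big)$, $g_{j+2}(t)=\frac{j+1}{2\pi}g_j(t)+\frac{j+1}{2\pi(j-1)}t\,g_j'(t)+\frac{j+1}{2\pi\omega_j}t$. *)

theory Defs
  imports "HOL-Analysis.Analysis"
begin

text \<open>Surface area of the unit sphere S^(j-1) in R^j: 2 pi^(j/2) / Gamma(j/2).\<close>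
definition sphere_area :: "nat \<Rightarrow> real" where
  "sphere_area j = 2 * pi powr (real j / 2) / Gamma (real j / 2)"

text \<open>Berg functions g_j (meaningful for j >= 2, on (-1,1)); indices 0 and 1 are dummies.
  The clause for Suc (Suc (Suc (Suc n))) is the recursion with j = n + 2.\<close>
fun berg :: "nat \<Rightarrow> real \<Rightarrow> real" where
  "berg 0 = (\<lambda>t. 0)"
| "berg (Suc 0) = (\<lambda>t. 0)"
| "berg (Suc (Suc 0)) =
     (\<lambda>t. 1 / (2 * pi) * (pi - arccos t) * sqrt (1 - t\<^sup>2) - 1 / (4 * pi) * t)"
| "berg (Suc (Suc (Suc 0))) =
     (\<lambda>t. 1 / (2 * pi) * (1 + t * ln (1 - t) + (4 / 3 - ln 2) * t))"
| "berg (Suc (Suc (Suc (Suc n)))) =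
     (let j = n + 2 in
      (\<lambda>t. (real j + 1) / (2 * pi) * berg j t
          + (real j + 1) / (2 * pi * (real j - 1)) * t * deriv (berg j) t
          + (real j + 1) / (2 * pi * sphere_area j) * t))"

end

theory Submission
  imports Defs
begin

definition SM :: "(real \<Rightarrow> real) \<Rightarrow> bool" where
  "SM f \<longleftrightarrow> (\<forall>m. (\<forall>t\<in>{-1<..<0}. (deriv^^m) f differentiable (at t))
                 \<and> (\<exists>L. ((deriv^^m) f \<longlongrightarrow> L) (at_right (-1))))"

lemma ev_I: "eventually (\<lambda>x. x \<in> {-1<..<(0::real)}) (at_right (-1))"
  unfolding eventually_at_right_field by (rule exI[of _ 0]) auto

lemma ev_nhds_I: "t \<in> {-1<..<(0::real)} \<Longrightarrow> eventually (\<lambda>x. x \<in> {-1<..<(0::real)}) (nhds t)"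
  by (rule eventually_nhds_in_open) auto

lemma SM_family:
  assumes e0: "\<forall>t\<in>{-1<..<0}. f t = g 0 t"
    and d: "\<And>m t. t \<in> {-1<..<0} \<Longrightarrow> (g m has_real_derivative g (Suc m) t) (at t)"
    and l: "\<And>m. \<exists>L. (g m \<longlongrightarrow> L) (at_right (-1))"
  shows "\<forall>t\<in>{-1<..<0}. (deriv^^m) f t = g m t" and "SM f"
proof -
  have eq: "\<forall>t\<in>{-1<..<0}. (deriv^^m) f t = g m t" for m
  proof (induction m)
    case 0 then show ?case using e0 by simp
  next
    case (Suc m)
    show ?case
    proof
      fix t :: real assume t: "t \<in> {-1<..<0}"
      have "eventually (\<lambda>x. (deriv^^m) f x = g m x) (nhds t)"
        using ev_nhds_I[OF t] Suc by (auto elim: eventually_mono)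
      then have "deriv ((deriv^^m) f) t = deriv (g m) t" by (rule deriv_cong_ev) simp
      also have "\<dots> = g (Suc m) t" using d[OF t] by (rule DERIV_imp_deriv)
      finally show "(deriv^^Suc m) f t = g (Suc m) t" by simp
    qed
  qed
  then show "\<forall>t\<in>{-1<..<0}. (deriv^^m) f t = g m t" .
  show "SM f" unfolding SM_def
  proof (intro allI conjI ballI)
    fix m and t :: real assume t: "t \<in> {-1<..<0}"
    have "((deriv^^m) f has_real_derivative g (Suc m) t) (at t)"
      by (rule has_field_derivative_transform_within_open[OF d[OF t], of "{-1<..<0}"])
         (use t eq in auto)
    then show "(deriv^^m) f differentiable (at t)" using real_differentiable_def by blast
  next
    fix m
    obtain L where L: "(g m \<longlongrightarrow> L) (at_right (-1))" using l by blast
    have "((deriv^^m) f \<longlongrightarrow> L) (at_right (-1))"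
      by (rule Lim_transform_eventually[OF L]) (use ev_I eq in \<open>auto elim: eventually_mono\<close>)
    then show "\<exists>L. ((deriv^^m) f \<longlongrightarrow> L) (at_right (-1))" by blast
  qed
qed

lemma SM_D:
  assumes "SM f" "t \<in> {-1<..<0}"
  shows "((deriv^^m) f has_real_derivative (deriv^^Suc m) f t) (at t)"
  using assms unfolding SM_def by (simp add: DERIV_deriv_iff_real_differentiable)

lemma SM_lim:
  assumes "SM f" obtains L where "((deriv^^m) f \<longlongrightarrow> L) (at_right (-1))"
  using assms unfolding SM_def by blast

definition ODE :: "nat \<Rightarrow> real \<Rightarrow> bool" where
  "ODE j c \<longleftrightarrow> (\<forall>t\<in>{-1<..<0}. (1 - t\<^sup>2) * (deriv^^2) (berg j) t
      - (real j - 1) * t * (deriv^^1) (berg j) t + (real j - 1) * berg j t = - c * t)"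

lemma berg_step:
  assumes "2 \<le> j"
  shows "berg (j+2) = (\<lambda>t. (real j + 1) / (2 * pi) * berg j t
          + (real j + 1) / (2 * pi * (real j - 1)) * t * deriv (berg j) t
          + (real j + 1) / (2 * pi * sphere_area j) * t)"
proof -
  obtain k where k: "j = Suc (Suc k)" using assms by (metis add_2_eq_Suc le_Suc_ex)
  have "j + 2 = Suc (Suc (Suc (Suc k)))" using k by simp
  then show ?thesis using k by (simp add: Let_def)
qed

lemma ODE_lim:
  assumes "SM f" and ode: "\<forall>t\<in>{-1<..<0}. (1 - t\<^sup>2) * (deriv^^2) f t
      - n * t * (deriv^^1) f t + n * f t = - c * t"
    and a: "(f \<longlongrightarrow> a) (at_right (-1))" and b: "((deriv^^1) f \<longlongrightarrow> b) (at_right (-1))"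
  shows "n * b + n * a = c"
proof -
  obtain L where L: "((deriv^^2) f \<longlongrightarrow> L) (at_right (-1))" using SM_lim[OF assms(1)] by blast
  have "((\<lambda>t. (1 - t\<^sup>2) * (deriv^^2) f t - n * t * (deriv^^1) f t + n * f t + c * t)
        \<longlongrightarrow> (1 - (-1)\<^sup>2) * L - n * (-1) * b + n * a + c * (-1)) (at_right (-1))"
    by (intro tendsto_intros L a b)
  moreover have "((\<lambda>t. (1 - t\<^sup>2) * (deriv^^2) f t - n * t * (deriv^^1) f t + n * f t + c * t)
        \<longlongrightarrow> 0) (at_right (-1))"
    by (rule Lim_transform_eventually[OF tendsto_const]) (use ev_I ode in \<open>auto elim!: eventually_mono\<close>)
  ultimately have "(1 - (-1)\<^sup>2) * L - n * (-1) * b + n * a + c * (-1) = 0"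
    using tendsto_unique trivial_limit_at_right_real by blast
  then show ?thesis by simp
qed

lemma sphere_area_pos: "j \<ge> 1 \<Longrightarrow> sphere_area j > 0"
  unfolding sphere_area_def by (intro divide_pos_pos mult_pos_pos Gamma_real_pos) auto

lemma step:
  assumes j: "2 \<le> j" and sm: "SM (berg j)" and c: "c \<ge> 0" and ode: "ODE j c"
    and a: "(berg j \<longlongrightarrow> a) (at_right (-1))"
  defines "A \<equiv> (real j + 1) / (2 * pi)" and "n \<equiv> real j - 1"
    and "B \<equiv> (real j + 1) / (2 * pi * sphere_area j)"
  shows "SM (berg (j+2))" "ODE (j+2) (A * (real j + 2) * c / n)"
    "(berg (j+2) \<longlongrightarrow> A * a - A / n * (c / n - a) - B) (at_right (-1))"
proof -
  define h where "h = berg j"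
  define H where "H m = (deriv^^m) h" for m
  have n1: "n \<ge> 1" using j unfolding n_def by simp
  define \<beta> where "\<beta> = (real j + 1) / (2 * pi * (real j - 1))"
  have \<beta>: "\<beta> = A / n" unfolding \<beta>_def A_def n_def by simp
  define g where "g m t = A * H m t + \<beta> * (t * H (Suc m) t + real m * H m t)
     + (if m = 0 then B * t else if m = 1 then B else 0)" for m t
  have HD: "(H m has_real_derivative H (Suc m) t) (at t)" if "t \<in> {-1<..<0}" for m t
    unfolding H_def h_def by (rule SM_D[OF sm that])
  have e0: "\<forall>t\<in>{-1<..<0}. berg (j+2) t = g 0 t"
    unfolding berg_step[OF j] by (simp add: g_def H_def h_def A_def B_def \<beta>_def)
  have gd: "(g m has_real_derivative g (Suc m) t) (at t)" if t: "t \<in> {-1<..<0}" for m t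
  proof -
    have "(g m has_real_derivative A * H (Suc m) t + \<beta> * ((1 * H (Suc m) t + t * H (Suc (Suc m)) t)
        + real m * H (Suc m) t) + (if m = 0 then B else 0)) (at t)"
      unfolding g_def
      by (cases "m = 0"; cases "m = 1")
         (auto intro!: derivative_eq_intros HD[OF t])
    moreover have "A * H (Suc m) t + \<beta> * ((1 * H (Suc m) t + t * H (Suc (Suc m)) t)
        + real m * H (Suc m) t) + (if m = 0 then B else 0) = g (Suc m) t"
      unfolding g_def by (simp add: algebra_simps)
    ultimately show ?thesis by simp
  qed
  have "\<forall>m. \<exists>L. (H m \<longlongrightarrow> L) (at_right (-1))"
    using sm unfolding SM_def H_def h_def by blast
  then obtain L where L: "\<And>m. (H m \<longlongrightarrow> L m) (at_right (-1))"
    by metis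
  have gl: "(g m \<longlongrightarrow> A * L m + \<beta> * ((-1) * L (Suc m) + real m * L m)
      + (if m = 0 then B * (-1) else if m = 1 then B else 0)) (at_right (-1))" for m
    unfolding g_def by (intro tendsto_intros L) (auto intro!: tendsto_eq_intros)
  have gl': "\<exists>L. (g m \<longlongrightarrow> L) (at_right (-1))" for m using gl by blast
  note fam = SM_family[of "berg (j+2)" g, OF e0 gd gl']
  show "SM (berg (j+2))" using fam by blast
  have L0: "L 0 = a" using L[of 0] a unfolding H_def h_def
    using tendsto_unique trivial_limit_at_right_real by fastforce
  have "n * L 1 + n * L 0 = c"
    by (rule ODE_lim[OF sm _ _ L[of 1, unfolded H_def h_def]])
       (use ode L[of 0] in \<open>auto simp: ODE_def n_def H_def h_def\<close>)
  then have L1: "L 1 = c / n - a" using n1 L0 by (simp add: field_simps)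
  show "(berg (j+2) \<longlongrightarrow> A * a - A / n * (c / n - a) - B) (at_right (-1))"
    using gl[of 0] fam(1)[of 0] L0 L1 \<beta>
    by (auto simp: H_def h_def elim!: Lim_transform_eventually intro: eventually_mono[OF ev_I])
  show "ODE (j+2) (A * (real j + 2) * c / n)"
    unfolding ODE_def
  proof
    fix t :: real assume t: "t \<in> {-1<..<0}"
    have E: "(1 - t\<^sup>2) * H 2 t - n * t * H 1 t + n * H 0 t = - c * t"
      using ode t unfolding ODE_def H_def h_def n_def by simp
    have "((\<lambda>x. (1 - x\<^sup>2) * H 2 x - n * x * H 1 x + n * H 0 x) has_real_derivative
        (- (2 * t)) * H 2 t + (1 - t\<^sup>2) * H 3 t - n * H 1 t - n * t * H 2 t + n * H 1 t) (at t)"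
      unfolding numeral_2_eq_2 numeral_3_eq_3
      by (auto intro!: derivative_eq_intros HD[OF t])
    moreover have "((\<lambda>x. (1 - x\<^sup>2) * H 2 x - n * x * H 1 x + n * H 0 x) has_real_derivative - c) (at t)"
      by (rule has_field_derivative_transform_within_open[of "\<lambda>x. - c * x" _ _ "{-1<..<0}"])
         (use t ode in \<open>auto intro!: derivative_eq_intros simp: ODE_def H_def h_def n_def\<close>)
    ultimately have E1: "(- (2 * t)) * H 2 t + (1 - t\<^sup>2) * H 3 t - n * H 1 t - n * t * H 2 t + n * H 1 t = - c"
      using DERIV_unique by blast
    have D: "(deriv^^k) (berg (j+2)) t = g k t" for k using fam(1) t by blast
    have rj: "real (j+2) - 1 = n + 2" unfolding n_def by simp
    show "(1 - t\<^sup>2) * (deriv^^2) (berg (j+2)) t - (real (j+2) - 1) * t * (deriv^^1) (berg (j+2)) t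
        + (real (j+2) - 1) * berg (j+2) t = - (A * (real j + 2) * c / n) * t"
    proof -
      have An: "A = \<beta> * n" using \<beta> n1 by simp
      have rj2: "real j + 2 = n + 3" unfolding n_def by simp
      have key: "(1 - t\<^sup>2) * g 2 t - (n + 2) * t * g 1 t + (n + 2) * g 0 t - (- (A * (real j + 2) * c / n) * t)
         = \<beta> * ((n+2) * ((1 - t\<^sup>2) * H 2 t - n * t * H 1 t + n * H 0 t + c * t)
            + t * ((- (2 * t)) * H 2 t + (1 - t\<^sup>2) * H 3 t - n * H 1 t - n * t * H 2 t + n * H 1 t + c))"
        unfolding rj2 An g_def using n1 by (simp add: numeral_2_eq_2 numeral_3_eq_3 field_simps)
      have "(1 - t\<^sup>2) * g 2 t - (n + 2) * t * g 1 t + (n + 2) * g 0 t = - (A * (real j + 2) * c / n) * t"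
        using key E E1 by simp
      then show ?thesis using D[of 0] D[of 1] D[of 2] unfolding rj by simp
    qed
  qed
qed

lemma isCont_right: "isCont f x \<Longrightarrow> (f \<longlongrightarrow> f x) (at_right x)"
  unfolding isCont_def by (rule tendsto_within_subset) auto

definition rr :: "nat \<Rightarrow> real \<Rightarrow> real" where "rr k t = fact k / (1 - t) ^ Suc k"

lemma rr_eq: "x > 0 \<Longrightarrow> fact k * (real (Suc k) * x ^ k) / (x ^ Suc k * x ^ Suc k)
   = (fact (Suc k) :: real) / x ^ Suc (Suc k)"
proof -
  assume x: "x > 0"
  have p: "x ^ Suc k * x ^ Suc k = x ^ k * x ^ Suc (Suc k)" by (simp add: power_add[symmetric])
  show ?thesis unfolding p using x by (simp add: field_simps)
qed

lemma rr_deriv: "t < 1 \<Longrightarrow> (rr k has_real_derivative rr (Suc k) t) (at t)"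
proof -
  assume t: "t < 1"
  have "rr k = (\<lambda>t. fact k / (1 - t) ^ Suc k)" by (rule ext) (simp add: rr_def)
  moreover have "((\<lambda>t. fact k / (1 - t) ^ Suc k) has_real_derivative
     (0 * (1 - t) ^ Suc k - fact k * (of_nat (Suc k) * ((0 - 1) * (1 - t) ^ (Suc k - Suc 0))))
       / ((1 - t) ^ Suc k * (1 - t) ^ Suc k)) (at t)"
    by (rule DERIV_divide[OF DERIV_const DERIV_power[OF DERIV_diff[OF DERIV_const DERIV_ident]]])
       (use t in simp)
  moreover have "(0 * (1 - t) ^ Suc k - fact k * (of_nat (Suc k) * ((0 - 1) * (1 - t) ^ (Suc k - Suc 0))))
       / ((1 - t) ^ Suc k * (1 - t) ^ Suc k) = rr (Suc k) t"
    using rr_eq[of "1 - t" k] t by (simp add: rr_def)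
  ultimately show ?thesis by simp
qed

fun g3 :: "nat \<Rightarrow> real \<Rightarrow> real" where
  "g3 0 t = berg 3 t"
| "g3 (Suc 0) t = 1 / (2 * pi) * (ln (1 - t) - t / (1 - t) + (4 / 3 - ln 2))"
| "g3 (Suc (Suc m)) t = - (1 / (2 * pi)) * (rr m t + rr (Suc m) t)"

lemma g3_deriv: "t < 1 \<Longrightarrow> (g3 m has_real_derivative g3 (Suc m) t) (at t)"
proof (induction m t rule: g3.induct)
  case (1 t)
  have b3: "g3 0 = (\<lambda>t. 1 / (2 * pi) * (1 + t * ln (1 - t) + (4 / 3 - ln 2) * t))"
    by (rule ext) (simp add: numeral_3_eq_3)
  have "((\<lambda>t. 1 / (2 * pi) * (1 + t * ln (1 - t) + (4 / 3 - ln 2) * t)) has_real_derivative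
     1 / (2 * pi) * (ln (1 - t) - t / (1 - t) + (4 / 3 - ln 2))) (at t)"
    using 1 by (auto intro!: derivative_eq_intros simp: field_simps)
  then show ?case unfolding b3 by simp
next
  case (2 t)
  have "((\<lambda>t. 1 / (2 * pi) * (ln (1 - t) - t / (1 - t) + (4 / 3 - ln 2))) has_real_derivative
     - (1 / (2 * pi)) * (1 / (1 - t) + 1 / (1 - t)^2)) (at t)"
    using 2 by (auto intro!: derivative_eq_intros simp: field_simps power2_eq_square)
  moreover have "g3 (Suc 0) = (\<lambda>t. 1 / (2 * pi) * (ln (1 - t) - t / (1 - t) + (4 / 3 - ln 2)))"
    by (rule ext) simp
  ultimately show ?case using 2 by (simp add: rr_def field_simps power2_eq_square)
next
  case (3 m t)
  have "g3 (Suc (Suc m)) = (\<lambda>t. - (1 / (2 * pi)) * (rr m t + rr (Suc m) t))" by (rule ext) simp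
  then show ?case using 3
    by (auto intro!: derivative_eq_intros rr_deriv simp: field_simps)
qed

lemma base3: "SM (berg 3)" "ODE 3 (3 / (2 * pi))" "(berg 3 \<longlongrightarrow> - 1 / (6 * pi)) (at_right (-1))"
proof -
  have lim: "(g3 m \<longlongrightarrow> g3 m (-1)) (at_right (-1))" for m
    by (rule isCont_right, rule DERIV_isCont, rule g3_deriv) simp
  have lim': "\<exists>L. (g3 m \<longlongrightarrow> L) (at_right (-1))" for m using lim by blast
  note fam = SM_family[of "berg 3" g3, OF _ g3_deriv lim']
  show "SM (berg 3)" using fam by auto
  show "ODE 3 (3 / (2 * pi))" unfolding ODE_def
  proof
    fix t :: real assume t: "t \<in> {-1<..<0}"
    have D: "(deriv^^k) (berg 3) t = g3 k t" for k using fam(1)[of k] t by auto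
    define u where "u = 1 - t"
    define L where "L = ln (1 - t)"
    define k where "k = 4 / 3 - ln (2::real)"
    have u: "u > 0" using t unfolding u_def by simp
    have e2: "g3 2 t = - (1 / (2 * pi)) * (1 / u + 1 / u^2)"
      by (simp add: numeral_2_eq_2 rr_def u_def)
    have e1: "g3 1 t = 1 / (2 * pi) * (L - t / u + k)" by (simp add: L_def u_def k_def)
    have e0: "g3 0 t = 1 / (2 * pi) * (1 + t * L + k * t)" by (simp add: L_def k_def numeral_3_eq_3)
    have tu: "t = 1 - u" unfolding u_def by simp
    have X: "(1 - t\<^sup>2) * (- (1 / u + 1 / u^2)) - 2 * t * (L - t / u + k) + 2 * (1 + t * L + k * t) = -3 * t"
      using u unfolding tu by (simp add: field_simps power2_eq_square)
    have "(1 - t\<^sup>2) * g3 2 t - (real 3 - 1) * t * g3 1 t + (real 3 - 1) * g3 0 t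
      = 1 / (2 * pi) * ((1 - t\<^sup>2) * (- (1 / u + 1 / u^2)) - 2 * t * (L - t / u + k) + 2 * (1 + t * L + k * t))"
      unfolding e0 e1 e2 using u by (simp add: field_simps)
    also have "\<dots> = - (3 / (2 * pi)) * t" unfolding X by simp
    finally have "(1 - t\<^sup>2) * g3 2 t - (real 3 - 1) * t * g3 1 t + (real 3 - 1) * g3 0 t = - (3 / (2 * pi)) * t" .
    then show "(1 - t\<^sup>2) * (deriv^^2) (berg 3) t - (real 3 - 1) * t * (deriv^^1) (berg 3) t
        + (real 3 - 1) * berg 3 t = - (3 / (2 * pi)) * t" using D[of 1] D[of 2] by simp
  qed
  have "berg 3 (-1) = - 1 / (6 * pi)" by (simp add: numeral_3_eq_3 field_simps)
  moreover have "g3 0 = berg 3" by (rule ext) simp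
  ultimately show "(berg 3 \<longlongrightarrow> - 1 / (6 * pi)) (at_right (-1))" using lim[of 0] by simp
qed

fun aa :: "nat \<Rightarrow> real" where
  "aa 0 = 1"
| "aa (Suc k) = (real k + 1) / (2 * real k + 3) * aa k"

lemma aa_bounds: "0 \<le> aa k \<and> aa k \<le> 1"
proof (induction k)
  case 0 then show ?case by simp
next
  case (Suc k)
  have "(real k + 1) * aa k \<le> (real k + 1) * 1" using Suc by (intro mult_left_mono) auto
  then show ?case using Suc by (simp add: field_simps)
qed

lemma aa_summable: "\<bar>x\<bar> < 1 \<Longrightarrow> summable (\<lambda>n. aa n * x ^ n)"
proof -
  assume x: "\<bar>x\<bar> < 1"
  show ?thesis
  proof (rule summable_comparison_test[of _ "\<lambda>n. \<bar>x\<bar> ^ n"])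
    show "\<exists>N. \<forall>n\<ge>N. norm (aa n * x ^ n) \<le> \<bar>x\<bar> ^ n"
      using aa_bounds by (auto simp: abs_mult power_abs intro!: mult_left_le_one_le)
    show "summable (\<lambda>n. \<bar>x\<bar> ^ n)" using x by (intro summable_geometric) simp
  qed
qed

definition cs :: "nat \<Rightarrow> nat \<Rightarrow> real" where "cs m = (diffs^^m) aa"

lemma cs_summable: "\<bar>x\<bar> < 1 \<Longrightarrow> summable (\<lambda>n. cs m n * x ^ n)"
proof (induction m arbitrary: x)
  case 0 then show ?case using aa_summable by (simp add: cs_def)
next
  case (Suc m)
  have "summable (\<lambda>n. diffs (cs m) n * x ^ n)"
    by (rule termdiff_converges[of x 1]) (use Suc in auto)
  then show ?case by (simp add: cs_def)
qed

definition FF :: "nat \<Rightarrow> real \<Rightarrow> real" where "FF m t = (\<Sum>n. cs m n * (t + 1) ^ n)"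

lemma FF_deriv: "\<bar>t + 1\<bar> < 1 \<Longrightarrow> (FF m has_real_derivative FF (Suc m) t) (at t)"
proof -
  assume t: "\<bar>t + 1\<bar> < 1"
  have "((\<lambda>z. \<Sum>n. cs m n * z ^ n) has_real_derivative (\<Sum>n. diffs (cs m) n * (t + 1) ^ n)) (at (t + 1))"
    by (rule termdiffs_strong'[of 1]) (use t cs_summable in auto)
  then have "((\<lambda>x. \<Sum>n. cs m n * (x + 1) ^ n) has_real_derivative (\<Sum>n. diffs (cs m) n * (t + 1) ^ n)) (at t)"
    using DERIV_shift[of "\<lambda>z. \<Sum>n. cs m n * z ^ n" _ t 1] by simp
  moreover have "diffs (cs m) = cs (Suc m)" by (simp add: cs_def)
  ultimately show ?thesis unfolding FF_def[abs_def] by simp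
qed

lemma aa_rec: "(2 * real n + 3) * aa (Suc n) = (real n + 1) * aa n"
  by simp

lemma PS_ode:
  assumes x: "\<bar>x\<bar> < 1"
  shows "x * (2 - x) * (\<Sum>n. diffs aa n * x ^ n) = 1 + (x - 1) * (\<Sum>n. aa n * x ^ n)"
proof -
  define s where "s = (\<Sum>n. aa n * x ^ n)"
  define d where "d = (\<Sum>n. diffs aa n * x ^ n)"
  have S: "(\<lambda>n. aa n * x ^ n) sums s" unfolding s_def using aa_summable[OF x] by (simp add: summable_sums)
  have Dd: "(\<lambda>n. diffs aa n * x ^ n) sums d" unfolding d_def
    using termdiff_converges[of x 1 aa] aa_summable x by (simp add: summable_sums)
  define w where "w n = (real n + 1) * aa n * x ^ Suc n" for n
  have S1: "(\<lambda>n. aa (Suc n) * x ^ Suc n) sums (s - 1)"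
    using S sums_Suc_iff[of "\<lambda>n. aa n * x ^ n" "s - 1"] by simp
  have "(\<lambda>n. 2 * x * (diffs aa n * x ^ n) + aa (Suc n) * x ^ Suc n) sums (2 * x * d + (s - 1))"
    by (intro sums_add sums_mult S1 Dd)
  moreover have "(\<lambda>n. 2 * x * (diffs aa n * x ^ n) + aa (Suc n) * x ^ Suc n) = w"
  proof
    fix n
    have "2 * x * (diffs aa n * x ^ n) + aa (Suc n) * x ^ Suc n
        = (2 * real n + 3) * aa (Suc n) * x ^ Suc n"
      by (simp add: diffs_def algebra_simps del: aa.simps)
    also have "\<dots> = w n" unfolding w_def aa_rec by simp
    finally show "2 * x * (diffs aa n * x ^ n) + aa (Suc n) * x ^ Suc n = w n" .
  qed
  ultimately have W1: "w sums (2 * x * d + (s - 1))" by simp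
  define v where "v n = real n * aa n * x ^ Suc n" for n
  have "(\<lambda>n. x\<^sup>2 * (diffs aa n * x ^ n)) sums (x\<^sup>2 * d)" by (intro sums_mult Dd)
  moreover have "(\<lambda>n. x\<^sup>2 * (diffs aa n * x ^ n)) = (\<lambda>n. v (Suc n))"
    by (rule ext) (simp add: v_def diffs_def power2_eq_square algebra_simps)
  ultimately have "(\<lambda>n. v (Suc n)) sums (x\<^sup>2 * d)" by simp
  then have V: "v sums (x\<^sup>2 * d)" using sums_Suc_iff[of v "x\<^sup>2 * d"] by (simp add: v_def)
  have "(\<lambda>n. v n + x * (aa n * x ^ n)) sums (x\<^sup>2 * d + x * s)" by (intro sums_add sums_mult V S)
  moreover have "(\<lambda>n. v n + x * (aa n * x ^ n)) = w"
    by (rule ext) (simp add: v_def w_def algebra_simps)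
  ultimately have W2: "w sums (x\<^sup>2 * d + x * s)" by simp
  have "2 * x * d + (s - 1) = x\<^sup>2 * d + x * s" using W1 W2 sums_unique2 by blast
  then show ?thesis unfolding s_def[symmetric] d_def[symmetric]
    by (simp add: algebra_simps power2_eq_square)
qed

lemma FF_ode: "\<bar>t + 1\<bar> < 1 \<Longrightarrow> (1 - t\<^sup>2) * FF 1 t = 1 + t * FF 0 t"
proof -
  assume t: "\<bar>t + 1\<bar> < 1"
  have "(t + 1) * (2 - (t + 1)) * (\<Sum>n. diffs aa n * (t + 1) ^ n) = 1 + (t + 1 - 1) * (\<Sum>n. aa n * (t + 1) ^ n)"
    by (rule PS_ode[OF t])
  then show ?thesis unfolding FF_def cs_def by (simp add: algebra_simps power2_eq_square)
qed

lemma FF_isCont: "\<bar>t + 1\<bar> < 1 \<Longrightarrow> isCont (FF m) t"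
  using FF_deriv DERIV_isCont by blast

lemma arccos_right: "(arccos \<longlongrightarrow> pi) (at_right (-1))"
proof -
  have "(arccos \<longlongrightarrow> arccos (-1)) (at (-1) within {-1..1})"
  proof -
    have "-1 \<in> {-1..1::real}" by simp
    from bspec[OF continuous_on_arccos'[unfolded continuous_on_def] this] show ?thesis .
  qed
  then show ?thesis using at_within_Icc_at_right[of "-1::real" 1] by simp
qed

lemma arc_FF: "t \<in> {-1<..<0} \<Longrightarrow> pi - arccos t = sqrt (1 - t\<^sup>2) * FF 0 t"
proof -
  define G where "G x = sqrt (1 - x\<^sup>2) * FF 0 x - (pi - arccos x)" for x
  have dG: "(G has_real_derivative 0) (at x)" if x: "x \<in> {-1<..<0}" for x
  proof -
    have pos: "0 < 1 - x\<^sup>2" using x by (simp add: abs_square_less_1)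
    have sq: "sqrt (1 - x\<^sup>2) * sqrt (1 - x\<^sup>2) = 1 - x\<^sup>2" using pos by simp
    have sqp: "sqrt (1 - x\<^sup>2) > 0" using pos by simp
    have d1: "((\<lambda>x. sqrt (1 - x\<^sup>2)) has_real_derivative - x / sqrt (1 - x\<^sup>2)) (at x)"
      using pos by (auto intro!: derivative_eq_intros simp: field_simps)
    have d2: "(arccos has_real_derivative inverse (- sqrt (1 - x\<^sup>2))) (at x)"
      using x by (intro DERIV_arccos) auto
    have d3: "(FF 0 has_real_derivative FF 1 x) (at x)"
      using FF_deriv[of x 0] x by simp
    have "(G has_real_derivative (- x / sqrt (1 - x\<^sup>2)) * FF 0 x + sqrt (1 - x\<^sup>2) * FF 1 x
         - (0 - inverse (- sqrt (1 - x\<^sup>2)))) (at x)"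
      unfolding G_def[abs_def]
      by (rule DERIV_cong[OF DERIV_diff[OF DERIV_mult[OF d1 d3] DERIV_diff[OF DERIV_const d2]]])
         (simp add: algebra_simps)
    moreover have "(- x / sqrt (1 - x\<^sup>2)) * FF 0 x + sqrt (1 - x\<^sup>2) * FF 1 x
         - (0 - inverse (- sqrt (1 - x\<^sup>2))) = ((1 - x\<^sup>2) * FF 1 x - x * FF 0 x - 1) / sqrt (1 - x\<^sup>2)"
      using sqp sq by (simp add: field_simps)
    moreover have "(1 - x\<^sup>2) * FF 1 x = 1 + x * FF 0 x" using x by (intro FF_ode) auto
    ultimately show ?thesis by simp
  qed
  obtain C where C: "\<forall>x\<in>{-1<..<0}. G x = C"
    using has_field_derivative_zero_constant[of "{-1<..<0::real}" G] dG
    by (metis convex_real_interval(8) has_field_derivative_at_within)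
  have "(G \<longlongrightarrow> sqrt (1 - (-1)\<^sup>2) * FF 0 (-1) - (pi - pi)) (at_right (-1))"
    unfolding G_def[abs_def]
    by (intro tendsto_intros arccos_right isCont_right FF_isCont) auto
  then have "(G \<longlongrightarrow> 0) (at_right (-1))" by simp
  moreover have "(G \<longlongrightarrow> C) (at_right (-1))"
    by (rule Lim_transform_eventually[OF tendsto_const]) (use ev_I C in \<open>auto elim!: eventually_mono\<close>)
  ultimately have "C = 0" using tendsto_unique trivial_limit_at_right_real by blast
  then show "t \<in> {-1<..<0} \<Longrightarrow> pi - arccos t = sqrt (1 - t\<^sup>2) * FF 0 t" using C unfolding G_def by auto
qed

fun gQ :: "nat \<Rightarrow> real \<Rightarrow> real" where
  "gQ 0 t = 1 / (2 * pi) * ((1 - t\<^sup>2) * FF 0 t) - 1 / (4 * pi) * t"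
| "gQ (Suc 0) t = 1 / (2 * pi) * (1 - t * FF 0 t) - 1 / (4 * pi)"
| "gQ (Suc (Suc m)) t = - (1 / (2 * pi)) * ((real m + 1) * FF m t + t * FF (Suc m) t)"

lemma gQ_deriv: "\<bar>t + 1\<bar> < 1 \<Longrightarrow> (gQ m has_real_derivative gQ (Suc m) t) (at t)"
proof (induction m t rule: gQ.induct)
  case (1 t)
  have e: "gQ 0 = (\<lambda>t. 1 / (2 * pi) * ((1 - t\<^sup>2) * FF 0 t) - 1 / (4 * pi) * t)" by (rule ext) simp
  have d3: "(FF 0 has_real_derivative FF 1 t) (at t)" using FF_deriv[of t 0] 1 by simp
  have d: "(gQ 0 has_real_derivative 1 / (2 * pi) * ((0 - 2 * t) * FF 0 t + (1 - t\<^sup>2) * FF 1 t) - 1 / (4 * pi)) (at t)"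
    unfolding e by (rule derivative_eq_intros refl d3 | simp)+
  have o: "(1 - t\<^sup>2) * FF 1 t = 1 + t * FF 0 t" using 1 by (rule FF_ode)
  have X: "1 / (2 * pi) * ((0 - 2 * t) * FF 0 t + (1 - t\<^sup>2) * FF 1 t) - 1 / (4 * pi) = gQ (Suc 0) t"
    by (simp only: distrib_left o gQ.simps) (simp add: field_simps)
  show ?case by (rule DERIV_cong[OF d X])
next
  case (2 t)
  have e: "gQ (Suc 0) = (\<lambda>t. 1 / (2 * pi) * (1 - t * FF 0 t) - 1 / (4 * pi))" by (rule ext) simp
  have d3: "(FF 0 has_real_derivative FF 1 t) (at t)" using FF_deriv[of t 0] 2 by simp
  have d: "(gQ (Suc 0) has_real_derivative 1 / (2 * pi) * (0 - (1 * FF 0 t + t * FF 1 t)) - 0) (at t)"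
    unfolding e by (rule derivative_eq_intros refl d3 | simp)+
  have X: "1 / (2 * pi) * (0 - (1 * FF 0 t + t * FF 1 t)) - 0 = gQ (Suc (Suc 0)) t" by (simp add: divide_simps)
  show ?case by (rule DERIV_cong[OF d X])
next
  case (3 m t)
  have e: "gQ (Suc (Suc m)) = (\<lambda>t. - (1 / (2 * pi)) * ((real m + 1) * FF m t + t * FF (Suc m) t))"
    by (rule ext) simp
  show ?case unfolding e using 3
    by (auto intro!: derivative_eq_intros FF_deriv simp: divide_simps) (simp add: algebra_simps)
qed

lemma base2: "SM (berg 2)" "ODE 2 (1 / pi)" "(berg 2 \<longlongrightarrow> 1 / (4 * pi)) (at_right (-1))"
proof -
  have lim: "(gQ m \<longlongrightarrow> gQ m (-1)) (at_right (-1))" for m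
    by (rule isCont_right, rule DERIV_isCont, rule gQ_deriv) simp
  have lim': "\<exists>L. (gQ m \<longlongrightarrow> L) (at_right (-1))" for m using lim by blast
  have e0: "\<forall>t\<in>{-1<..<0}. berg 2 t = gQ 0 t"
  proof
    fix t :: real assume t: "t \<in> {-1<..<0}"
    have pos: "0 \<le> 1 - t\<^sup>2" using t by (simp add: abs_square_le_1)
    have "berg 2 t = 1 / (2 * pi) * (pi - arccos t) * sqrt (1 - t\<^sup>2) - 1 / (4 * pi) * t"
      by (simp add: numeral_2_eq_2)
    also have "\<dots> = 1 / (2 * pi) * (sqrt (1 - t\<^sup>2) * sqrt (1 - t\<^sup>2) * FF 0 t) - 1 / (4 * pi) * t"
      by (subst arc_FF[OF t]) (simp add: algebra_simps)
    also have "\<dots> = gQ 0 t" using pos by simp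
    finally show "berg 2 t = gQ 0 t" .
  qed
  have gd: "t \<in> {-1<..<0} \<Longrightarrow> (gQ m has_real_derivative gQ (Suc m) t) (at t)" for m t
    by (rule gQ_deriv) auto
  note fam = SM_family[of "berg 2" gQ, OF e0 gd lim']
  show "SM (berg 2)" using fam by auto
  show "ODE 2 (1 / pi)" unfolding ODE_def
  proof
    fix t :: real assume t: "t \<in> {-1<..<0}"
    have D: "(deriv^^k) (berg 2) t = gQ k t" for k using fam(1)[of k] t by auto
    have o: "(1 - t\<^sup>2) * FF 1 t = 1 + t * FF 0 t" using t by (intro FF_ode) auto
    have "(1 - t\<^sup>2) * gQ 2 t - t * gQ 1 t + gQ 0 t
       = - (1 / (2 * pi)) * ((1 - t\<^sup>2) * FF 0 t + t * ((1 - t\<^sup>2) * FF 1 t))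
         - t * (1 / (2 * pi) * (1 - t * FF 0 t) - 1 / (4 * pi))
         + (1 / (2 * pi) * ((1 - t\<^sup>2) * FF 0 t) - 1 / (4 * pi) * t)"
      by (simp add: numeral_2_eq_2 power2_eq_square field_simps)
    also have "\<dots> = - (1 / pi) * t" unfolding o by (simp add: field_simps power2_eq_square)
    finally have "(1 - t\<^sup>2) * gQ 2 t - t * gQ 1 t + gQ 0 t = - (1 / pi) * t" .
    then show "(1 - t\<^sup>2) * (deriv^^2) (berg 2) t - (real 2 - 1) * t * (deriv^^1) (berg 2) t
        + (real 2 - 1) * berg 2 t = - (1 / pi) * t" using D[of 0] D[of 1] D[of 2] by simp
  qed
  have "gQ 0 (-1) = 1 / (4 * pi)" by simp
  then have "(gQ 0 \<longlongrightarrow> 1 / (4 * pi)) (at_right (-1))" using lim[of 0] by simp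
  then show "(berg 2 \<longlongrightarrow> 1 / (4 * pi)) (at_right (-1))"
    by (rule Lim_transform_eventually) (use ev_I e0 in \<open>auto elim!: eventually_mono\<close>)
qed

definition P :: "nat \<Rightarrow> bool" where
  "P j \<longleftrightarrow> (\<exists>c a. SM (berg j) \<and> c \<ge> 0 \<and> ODE j c \<and> (berg j \<longlongrightarrow> a) (at_right (-1)) \<and> a < 0)"

lemma P_step: assumes "2 \<le> j" "P j" shows "P (j + 2)"
proof -
  obtain c a where h: "SM (berg j)" "c \<ge> 0" "ODE j c" "(berg j \<longlongrightarrow> a) (at_right (-1))" "a < 0"
    using assms(2) unfolding P_def by blast
  define A where "A = (real j + 1) / (2 * pi)"
  define n where "n = real j - 1"
  define B where "B = (real j + 1) / (2 * pi * sphere_area j)"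
  note st = step[OF assms(1) h(1-4), folded A_def n_def B_def]
  have A: "A > 0" unfolding A_def by simp
  have n: "n \<ge> 1" unfolding n_def using assms(1) by simp
  have B: "B > 0" unfolding B_def using sphere_area_pos[of j] assms(1) by simp
  have c': "A * (real j + 2) * c / n \<ge> 0" using A n h(2) by simp
  have "c / n \<ge> 0" using n h(2) by simp
  then have "c / n - a \<ge> 0" using h(5) by linarith
  then have "A / n * (c / n - a) \<ge> 0" using A n
    by (intro mult_nonneg_nonneg divide_nonneg_nonneg) auto
  moreover have "A * a < 0" using A h(5) by (simp add: mult_pos_neg)
  ultimately have "A * a - A / n * (c / n - a) - B < 0" using B by linarith
  then show ?thesis unfolding P_def using st c' by blast
qed

lemma P_odd: "P (3 + 2 * k)"
proof (induction k)
  case 0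
  have "P 3" unfolding P_def using base3
    by (intro exI[of _ "3 / (2 * pi)"] exI[of _ "- 1 / (6 * pi)"]) auto
  then show ?case by simp
next
  case (Suc k)
  have "P (3 + 2 * k + 2)" by (rule P_step) (use Suc in auto)
  then show ?case by (simp add: algebra_simps)
qed

lemma P4: "P 4"
proof -
  define A where "A = (real 2 + 1) / (2 * pi)"
  define n where "n = real 2 - 1"
  define B where "B = (real 2 + 1) / (2 * pi * sphere_area 2)"
  have c0: "0 \<le> 1 / pi" by simp
  note st = step[OF order_refl base2(1) c0 base2(2) base2(3), folded A_def n_def B_def]
  have A: "A > 0" unfolding A_def by simp
  have n: "n = 1" unfolding n_def by simp
  have B: "B > 0" unfolding B_def using sphere_area_pos[of 2] by simp
  have "A * (1 / (4 * pi)) - A / n * (1 / pi / n - 1 / (4 * pi)) - B = A * (- 1 / (2 * pi)) - B"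
    unfolding n by (simp add: field_simps)
  also have "\<dots> < 0"
  proof -
    have "A * (1 / (2 * pi)) > 0" using A by simp
    then show ?thesis using B by simp
  qed
  finally have neg: "A * (1 / (4 * pi)) - A / n * (1 / pi / n - 1 / (4 * pi)) - B < 0" .
  have c': "A * (real 2 + 2) * (1 / pi) / n \<ge> 0" using A n by simp
  have "P (2 + 2)" unfolding P_def using st neg c' by blast
  then show ?thesis by simp
qed

lemma P_even: "P (4 + 2 * k)"
proof (induction k)
  case 0 then show ?case using P4 by simp
next
  case (Suc k)
  have "P (4 + 2 * k + 2)" by (rule P_step) (use Suc in auto)
  then show ?case by (simp add: algebra_simps)
qed

theorem lemma4p6:
  fixes j :: nat
  assumes "j \<ge> 3"
  shows "\<exists>L. (berg j \<longlongrightarrow> L) (at_right (-1)) \<and> L < 0"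
proof -
  have "P j"
  proof (cases "odd j")
    case True
    then have "j = 3 + 2 * ((j - 3) div 2)" using assms by presburger
    then show ?thesis using P_odd[of "(j - 3) div 2"] by metis
  next
    case False
    then have "j = 4 + 2 * ((j - 4) div 2)" using assms by presburger
    then show ?thesis using P_even[of "(j - 4) div 2"] by metis
  qed
  then show ?thesis unfolding P_def by blast
qed

end
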